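(* There is a constant $c>0$ such that the following holds. Let $k\in\mathbb N$ and let $\Pi$ be a prefix of $k$ temporal operators among $\mathsf X$, $\mathsf F$ and $\mathsf G$. Let $\phi$ be a formula of $\mathsf F(\mathrm{LTL}[\mathsf O])$ and $\psi$ a formula of $\mathrm{LTL}[\mathsf X,\mathsf{wX},\mathsf F,\mathsf G]$ with $\phi\equiv_\omega\psi$. Then the minimal deterministic Büchi automaton for $\mathcal L^\omega(\Pi(\psi))$ has at most $(k+1)\cdot2^{c\cdot\mathrm{size}(\phi)}$ states.
   Context: Let $AP$ be a finite set of atomic propositions and $\Sigma=2^{AP}$. Formulae (negation normal form) are built from literals $p,\neg p$ ($p\in AP$) with $\land,\lor$ and temporal operators $\mathsf X,\mathsf{wX},\mathsf F,\mathsf G,\mathsf O$ (among others). Infinite-trace semantics on $\sigma\in\Sigma^\omega$ at positions $i\in\mathbb N$: literals/Booleans as usual; $\mathsf X\phi$ and $\mathsf{wX}\phi$: $\phi$ holds at $i+1$; $\mathsf F\phi$/$\mathsf G\phi$: $\phi$ at some/every $j\ge i$; $\mathsf O\phi$: $\phi$ at some $0\le j\le i$. $\mathcal L^\omega(\phi)=\{\sigma\in\Sigma^\omega:\sigma,0\models\phi\}$ and $\phi\equiv_\omega\psi$ iff $\mathcal L^\omega(\phi)=\mathcal L^\omega(\psi)$. Size: literals 1, unary operators add 1, binary connectives sum plus 1. $\mathrm{LTL}[S]$: formulae whose temporal operators lie in $S$; $\mathsf F(\mathrm{LTL}[S])$: formulae $\mathsf F(\alpha)$ with $\alpha\in\mathrm{LTL}[S]$.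 $\Pi(\psi)$ denotes the formula obtained by prefixing $\psi$ with the sequence of operators $\Pi$. A deterministic Büchi automaton (DBA) is $(Q,\Sigma,\delta,q_0,F)$ with finite state set $Q$, total transition function $\delta:Q\times\Sigma\to Q$, initial state $q_0$ and accepting set $F\subseteq Q$; it accepts $\sigma\in\Sigma^\omega$ iff its unique run on $\sigma$ visits $F$ infinitely often. The size of a DBA is its number of states. *)

theory Defs
  imports Complex_Main "HOL-Library.Infinite_Set"
begin

datatype ltl =
    Prop nat
  | NProp nat
  | And ltl ltl
  | Or ltl ltl
  | Next ltl
  | WNext ltl
  | Eventually ltl
  | Globally ltl
  | Once ltl

type_synonym trace = "nat \<Rightarrow> nat set"

fun sat :: "trace \<Rightarrow> nat \<Rightarrow> ltl \<Rightarrow> bool" where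
  "sat \<sigma> i (Prop p) = (p \<in> \<sigma> i)"
| "sat \<sigma> i (NProp p) = (p \<notin> \<sigma> i)"
| "sat \<sigma> i (And a b) = (sat \<sigma> i a \<and> sat \<sigma> i b)"
| "sat \<sigma> i (Or a b) = (sat \<sigma> i a \<or> sat \<sigma> i b)"
| "sat \<sigma> i (Next a) = sat \<sigma> (Suc i) a"
| "sat \<sigma> i (WNext a) = sat \<sigma> (Suc i) a"
| "sat \<sigma> i (Eventually a) = (\<exists>j\<ge>i. sat \<sigma> j a)"
| "sat \<sigma> i (Globally a) = (\<forall>j\<ge>i. sat \<sigma> j a)"
| "sat \<sigma> i (Once a) = (\<exists>j\<le>i. sat \<sigma> j a)"

fun atoms :: "ltl \<Rightarrow> nat set" where
  "atoms (Prop p) = {p}"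
| "atoms (NProp p) = {p}"
| "atoms (And a b) = atoms a \<union> atoms b"
| "atoms (Or a b) = atoms a \<union> atoms b"
| "atoms (Next a) = atoms a"
| "atoms (WNext a) = atoms a"
| "atoms (Eventually a) = atoms a"
| "atoms (Globally a) = atoms a"
| "atoms (Once a) = atoms a"

fun fsize :: "ltl \<Rightarrow> nat" where
  "fsize (Prop p) = 1"
| "fsize (NProp p) = 1"
| "fsize (And a b) = fsize a + fsize b + 1"
| "fsize (Or a b) = fsize a + fsize b + 1"
| "fsize (Next a) = fsize a + 1"
| "fsize (WNext a) = fsize a + 1"
| "fsize (Eventually a) = fsize a + 1"
| "fsize (Globally a) = fsize a + 1"
| "fsize (Once a) = fsize a + 1"

definition traces :: "nat set \<Rightarrow> trace set" where
  "traces AP = {\<sigma>. \<forall>i. \<sigma> i \<subseteq> AP}"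

definition lang_omega :: "nat set \<Rightarrow> ltl \<Rightarrow> trace set" where
  "lang_omega AP \<phi> = {\<sigma> \<in> traces AP. sat \<sigma> 0 \<phi>}"

definition equiv_omega :: "nat set \<Rightarrow> ltl \<Rightarrow> ltl \<Rightarrow> bool" where
  "equiv_omega AP \<phi> \<psi> \<longleftrightarrow> lang_omega AP \<phi> = lang_omega AP \<psi>"

datatype top = TX | TwX | TF | TG | TO

fun tops :: "ltl \<Rightarrow> top set" where
  "tops (Prop p) = {}"
| "tops (NProp p) = {}"
| "tops (And a b) = tops a \<union> tops b"
| "tops (Or a b) = tops a \<union> tops b"
| "tops (Next a) = insert TX (tops a)"
| "tops (WNext a) = insert TwX (tops a)"
| "tops (Eventually a) = insert TF (tops a)"
| "tops (Globally a) = insert TG (tops a)"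
| "tops (Once a) = insert TO (tops a)"

definition in_LTL :: "top set \<Rightarrow> ltl \<Rightarrow> bool" where
  "in_LTL S \<phi> \<longleftrightarrow> tops \<phi> \<subseteq> S"

definition in_F_LTL :: "top set \<Rightarrow> ltl \<Rightarrow> bool" where
  "in_F_LTL S \<phi> \<longleftrightarrow> (\<exists>\<alpha>. \<phi> = Eventually \<alpha> \<and> in_LTL S \<alpha>)"

datatype pop = PX | PF | PG

fun apply_pop :: "pop \<Rightarrow> ltl \<Rightarrow> ltl" where
  "apply_pop PX a = Next a"
| "apply_pop PF a = Eventually a"
| "apply_pop PG a = Globally a"

definition apply_prefix :: "pop list \<Rightarrow> ltl \<Rightarrow> ltl" where
  "apply_prefix \<Pi> \<psi> = foldr apply_pop \<Pi> \<psi>"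

record dba =
  states :: "nat set"
  delta :: "nat \<Rightarrow> nat set \<Rightarrow> nat"
  init :: nat
  acc :: "nat set"

definition wf_dba :: "nat set \<Rightarrow> dba \<Rightarrow> bool" where
  "wf_dba AP A \<longleftrightarrow> finite (states A) \<and> init A \<in> states A \<and> acc A \<subseteq> states A
     \<and> (\<forall>q\<in>states A. \<forall>a. a \<subseteq> AP \<longrightarrow> delta A q a \<in> states A)"

fun run :: "dba \<Rightarrow> trace \<Rightarrow> nat \<Rightarrow> nat" where
  "run A w 0 = init A"
| "run A w (Suc n) = delta A (run A w n) (w n)"

definition dba_lang :: "nat set \<Rightarrow> dba \<Rightarrow> trace set" where
  "dba_lang AP A = {w \<in> traces AP. \<exists>\<^sub>\<infinity>n. run A w n \<in> acc A}"

definition min_dba_at_most :: "nat set \<Rightarrow> trace set \<Rightarrow> nat \<Rightarrow> bool" where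
  "min_dba_at_most AP L N \<longleftrightarrow>
     (\<exists>A. wf_dba AP A \<and> dba_lang AP A = L \<and> card (states A) \<le> N)"

end

theory Submission
  imports Defs
begin

fun arun :: "('q \<Rightarrow> nat set \<Rightarrow> 'q) \<Rightarrow> 'q \<Rightarrow> trace \<Rightarrow> nat \<Rightarrow> 'q" where
  "arun d q0 w 0 = q0"
| "arun d q0 w (Suc n) = d (arun d q0 w n) (w n)"

lemma arun_in:
  assumes "q0 \<in> Q" "\<forall>q\<in>Q. \<forall>a. a \<subseteq> AP \<longrightarrow> d q a \<in> Q" "w \<in> traces AP"
  shows "arun d q0 w n \<in> Q"
  using assms by (induction n) (auto simp: traces_def)

lemma transfer_dba0:
  fixes Q :: "'q set" and d :: "'q \<Rightarrow> nat set \<Rightarrow> 'q"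
  assumes fin: "finite Q" and q0: "q0 \<in> Q" and FQ: "F \<subseteq> Q"
    and cl: "\<forall>q\<in>Q. \<forall>a. a \<subseteq> AP \<longrightarrow> d q a \<in> Q"
    and corr: "\<forall>w\<in>traces AP. w \<in> L \<longleftrightarrow> (\<exists>\<^sub>\<infinity>n. arun d q0 w n \<in> F)"
    and LT: "L \<subseteq> traces AP" and cardQ: "card Q \<le> N"
  shows "min_dba_at_most AP L N"
proof -
  obtain f where bf: "bij_betw f Q {0..<card Q}" using ex_bij_betw_finite_nat[OF fin] by blast
  have inj: "inj_on f Q" using bf bij_betw_def by blast
  define A where "A = \<lparr>states = f ` Q, delta = (\<lambda>n a. f (d (inv_into Q f n) a)), init = f q0, acc = f ` F\<rparr>"
  have wf: "wf_dba AP A"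
    unfolding wf_dba_def A_def using fin q0 FQ cl inj by auto
  have runeq: "run A w n = f (arun d q0 w n)" if "w \<in> traces AP" for w n
  proof (induction n)
    case 0 then show ?case by (simp add: A_def)
  next
    case (Suc n)
    have "arun d q0 w n \<in> Q" using arun_in[OF q0 cl that] .
    then show ?case using Suc inj by (simp add: A_def)
  qed
  have "dba_lang AP A = L"
  proof
    show "dba_lang AP A \<subseteq> L"
    proof
      fix w assume "w \<in> dba_lang AP A"
      then have w: "w \<in> traces AP" and i: "\<exists>\<^sub>\<infinity>n. run A w n \<in> acc A" by (auto simp: dba_lang_def)
      have "\<exists>\<^sub>\<infinity>n. arun d q0 w n \<in> F"
        using i by (rule INFM_mono) (use runeq[OF w] arun_in[OF q0 cl w] inj FQ in \<open>auto simp: A_def inj_on_image_mem_iff\<close>)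
      then show "w \<in> L" using corr w by blast
    qed
  next
    show "L \<subseteq> dba_lang AP A"
    proof
      fix w assume "w \<in> L"
      then have w: "w \<in> traces AP" using LT by blast
      then have i: "\<exists>\<^sub>\<infinity>n. arun d q0 w n \<in> F" using corr \<open>w \<in> L\<close> by blast
      have "\<exists>\<^sub>\<infinity>n. run A w n \<in> acc A"
        using i by (rule INFM_mono) (use runeq[OF w] in \<open>auto simp: A_def\<close>)
      then show "w \<in> dba_lang AP A" using w by (simp add: dba_lang_def)
    qed
  qed
  moreover have "card (states A) \<le> N" using cardQ card_image_le[OF fin, of f] by (simp add: A_def)
  ultimately show ?thesis using wf unfolding min_dba_at_most_def by blast
qed
lemma transfer_dba:
  fixes Q :: "'q set" and d :: "'q \<Rightarrow> nat set \<Rightarrow> 'q"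
  assumes fin: "finite Q" and qi: "qi \<in> Q"
    and cl: "\<forall>q\<in>Q. \<forall>a. a \<subseteq> AP \<longrightarrow> d q a \<in> Q"
    and corr: "\<forall>w\<in>traces AP. w \<in> L \<longleftrightarrow> (\<exists>\<^sub>\<infinity>n. P (arun d qi w n))"
    and LT: "L \<subseteq> traces AP" and cardQ: "card Q \<le> N"
  shows "min_dba_at_most AP L N"
proof (rule transfer_dba0[OF fin qi _ cl _ LT cardQ, of "{q \<in> Q. P q}"])
  show "\<forall>w\<in>traces AP. w \<in> L \<longleftrightarrow> (\<exists>\<^sub>\<infinity>n. arun d qi w n \<in> {q \<in> Q. P q})"
  proof
    fix w assume w: "w \<in> traces AP"
    have e: "(arun d qi w n \<in> {q \<in> Q. P q}) = P (arun d qi w n)" for n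
      using arun_in[OF qi cl w, of n] by blast
    show "w \<in> L \<longleftrightarrow> (\<exists>\<^sub>\<infinity>n. arun d qi w n \<in> {q \<in> Q. P q})"
      unfolding e using corr w by blast
  qed
qed auto

fun sf :: "ltl \<Rightarrow> ltl set" where
  "sf (Prop p) = {Prop p}"
| "sf (NProp p) = {NProp p}"
| "sf (And a b) = insert (And a b) (sf a \<union> sf b)"
| "sf (Or a b) = insert (Or a b) (sf a \<union> sf b)"
| "sf (Next a) = insert (Next a) (sf a)"
| "sf (WNext a) = insert (WNext a) (sf a)"
| "sf (Eventually a) = insert (Eventually a) (sf a)"
| "sf (Globally a) = insert (Globally a) (sf a)"
| "sf (Once a) = insert (Once a) (sf a)"

lemma sf_self: "x \<in> sf x" by (cases x) auto
lemma sf_finite: "finite (sf x)" by (induction x) auto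
lemma sf_trans: "b \<in> sf a \<Longrightarrow> sf b \<subseteq> sf a" by (induction a) auto
lemma sf_tops: "b \<in> sf a \<Longrightarrow> tops b \<subseteq> tops a" by (induction a) auto
lemma sf_card: "card (sf x) \<le> fsize x"
proof (induction x)
  case (And a b)
  have "card (sf (And a b)) \<le> Suc (card (sf a \<union> sf b))" by (simp add: card_insert_le_m1 card_insert_if sf_finite)
  also have "\<dots> \<le> Suc (card (sf a) + card (sf b))" using card_Un_le by simp
  finally show ?case using And by simp
next
  case (Or a b)
  have "card (sf (Or a b)) \<le> Suc (card (sf a \<union> sf b))" by (simp add: card_insert_if sf_finite)
  also have "\<dots> \<le> Suc (card (sf a) + card (sf b))" using card_Un_le by simp
  finally show ?case using Or by simp
qed (auto simp: card_insert_if sf_finite)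

fun ev :: "ltl set \<Rightarrow> nat set \<Rightarrow> ltl \<Rightarrow> bool" where
  "ev S a (Prop p) = (p \<in> a)"
| "ev S a (NProp p) = (p \<notin> a)"
| "ev S a (And x y) = (ev S a x \<and> ev S a y)"
| "ev S a (Or x y) = (ev S a x \<or> ev S a y)"
| "ev S a (Once x) = (Once x \<in> S \<or> ev S a x)"
| "ev S a _ = False"

definition st :: "ltl \<Rightarrow> trace \<Rightarrow> nat \<Rightarrow> ltl set" where
  "st \<alpha> w i = (if i = 0 then {} else {b \<in> sf \<alpha>. sat w (i - 1) b})"

definition upd :: "ltl \<Rightarrow> ltl set \<Rightarrow> nat set \<Rightarrow> ltl set" where
  "upd \<alpha> S a = {b \<in> sf \<alpha>. ev S a b}"

lemma once_suc: "(\<exists>j\<le>Suc i. P j) = ((\<exists>j\<le>i. P j) \<or> P (Suc i))"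
  using le_Suc_eq by auto

lemma ev_st: "sf b \<subseteq> sf \<alpha> \<Longrightarrow> tops b \<subseteq> {TO} \<Longrightarrow> ev (st \<alpha> w i) (w i) b = sat w i b"
proof (induction b)
  case (Once c)
  have o: "Once c \<in> sf \<alpha>" using Once.prems sf_self by blast
  have ih: "ev (st \<alpha> w i) (w i) c = sat w i c" using Once by auto
  show ?case
  proof (cases i)
    case 0 then show ?thesis using ih by (simp add: st_def)
  next
    case (Suc i')
    have "(Once c \<in> st \<alpha> w i) = sat w i' (Once c)" using o Suc by (simp add: st_def)
    then show ?thesis using ih Suc once_suc[of i' "\<lambda>j. sat w j c"] by simp
  qed
qed auto

lemma upd_st: assumes a: "tops \<alpha> \<subseteq> {TO}" shows "upd \<alpha> (st \<alpha> w i) (w i) = st \<alpha> w (Suc i)"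
proof -
  have "ev (st \<alpha> w i) (w i) b = sat w i b" if b: "b \<in> sf \<alpha>" for b
  proof -
    have "tops b \<subseteq> {TO}" using sf_tops[OF b] a by blast
    then show ?thesis using ev_st[of b \<alpha> w i] sf_trans[OF b] by blast
  qed
  then show ?thesis unfolding upd_def st_def[of _ _ "Suc i"] by auto
qed

lemma alpha_in_st: "(\<alpha> \<in> st \<alpha> w (Suc i)) = sat w i \<alpha>"
  by (simp add: st_def sf_self)

definition sh :: "trace \<Rightarrow> nat \<Rightarrow> trace" where "sh \<sigma> j = (\<lambda>n. \<sigma> (n + j))"

definition D :: "ltl \<Rightarrow> trace \<Rightarrow> bool" where "D \<alpha> w = (\<exists>m. sat w m \<alpha>)"

lemma ex_shift: "(\<exists>k\<ge>i+j. P k) = (\<exists>k\<ge>i. P (k+j::nat))"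
proof
  assume "\<exists>k\<ge>i+j. P k"
  then obtain k where "k \<ge> i + j" "P k" by blast
  then show "\<exists>k\<ge>i. P (k+j)" by (intro exI[of _ "k - j"]) auto
next
  assume "\<exists>k\<ge>i. P (k+j)"
  then obtain k where "k \<ge> i" "P (k + j)" by blast
  then show "\<exists>k\<ge>i+j. P k" by (intro exI[of _ "k + j"]) auto
qed
lemma all_shift: "(\<forall>k\<ge>i+j. P k) = (\<forall>k\<ge>i. P (k+j::nat))"
  using ex_shift[of i j "\<lambda>k. \<not> P k"] by blast

lemma future_shift: "tops \<psi> \<subseteq> {TX,TwX,TF,TG} \<Longrightarrow> sat \<sigma> (i + j) \<psi> = sat (sh \<sigma> j) i \<psi>"
proof (induction \<psi> arbitrary: i)
  case (Eventually a)
  then show ?case using ex_shift[of i j "\<lambda>k. sat \<sigma> k a"] by simp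
next
  case (Globally a)
  then show ?case using all_shift[of i j "\<lambda>k. sat \<sigma> k a"] by simp
next
  case (Next a)
  then show ?case using Next.IH[of "Suc i"] by (simp add: sh_def)
next
  case (WNext a)
  then show ?case using WNext.IH[of "Suc i"] by (simp add: sh_def)
qed (auto simp: sh_def)

lemma prep: "tops \<alpha> \<subseteq> {TO} \<Longrightarrow> sat (\<lambda>n. w (Suc n)) i \<alpha> \<Longrightarrow> sat w (Suc i) \<alpha>"
proof (induction \<alpha> arbitrary: i)
  case (Once b)
  then obtain k where "k \<le> i" "sat (\<lambda>n. w (Suc n)) k b" by auto
  then show ?case using Once by (auto intro!: exI[of _ "Suc k"])
qed auto

lemma D_suc: "tops \<alpha> \<subseteq> {TO} \<Longrightarrow> D \<alpha> (sh \<sigma> (Suc j)) \<Longrightarrow> D \<alpha> (sh \<sigma> j)"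
  unfolding D_def using prep[of \<alpha> "sh \<sigma> j"] by (auto simp: sh_def)

lemma D_down: "tops \<alpha> \<subseteq> {TO} \<Longrightarrow> D \<alpha> (sh \<sigma> (j + d)) \<Longrightarrow> D \<alpha> (sh \<sigma> j)"
  by (induction d) (auto dest: D_suc)

lemma D_down': "tops \<alpha> \<subseteq> {TO} \<Longrightarrow> D \<alpha> (sh \<sigma> j') \<Longrightarrow> j \<le> j' \<Longrightarrow> D \<alpha> (sh \<sigma> j)"
  using D_down[of \<alpha> \<sigma> j "j' - j"] by simp

lemma sh_traces: "\<sigma> \<in> traces AP \<Longrightarrow> sh \<sigma> j \<in> traces AP"
  by (simp add: traces_def sh_def)

lemma char:
  assumes a: "tops \<alpha> \<subseteq> {TO}" and p: "tops \<psi> \<subseteq> {TX,TwX,TF,TG}"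
    and base: "\<forall>\<sigma>\<in>traces AP. sat \<sigma> 0 \<psi> = D \<alpha> \<sigma>" and s: "\<sigma> \<in> traces AP"
  shows "sat \<sigma> i (apply_prefix \<Pi> \<psi>) = (if PG \<in> set \<Pi> then (\<forall>j. D \<alpha> (sh \<sigma> j))
           else D \<alpha> (sh \<sigma> (i + length (filter (\<lambda>p. p = PX) \<Pi>))))"
proof (induction \<Pi> arbitrary: i)
  case Nil
  have "sat \<sigma> i \<psi> = sat (sh \<sigma> i) 0 \<psi>" using future_shift[OF p, of \<sigma> 0 i] by simp
  then show ?case using base sh_traces[OF s] by (simp add: apply_prefix_def)
next
  case (Cons p \<Pi>)
  have ap: "apply_prefix (p # \<Pi>) \<psi> = apply_pop p (apply_prefix \<Pi> \<psi>)" by (simp add: apply_prefix_def)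
  let ?n = "length (filter (\<lambda>p. p = PX) \<Pi>)"
  show ?case
  proof (cases "PG \<in> set \<Pi>")
    case True
    show ?thesis unfolding ap using Cons True by (cases p) auto
  next
    case False
    show ?thesis
    proof (cases p)
      case PX then show ?thesis unfolding ap using Cons False by simp
    next
      case PF
      have "(\<exists>j\<ge>i. D \<alpha> (sh \<sigma> (j + ?n))) = D \<alpha> (sh \<sigma> (i + ?n))"
        using D_down'[OF a] by auto
      then show ?thesis unfolding ap using Cons False PF by simp
    next
      case PG
      have "(\<forall>j\<ge>i. D \<alpha> (sh \<sigma> (j + ?n))) = (\<forall>j. D \<alpha> (sh \<sigma> j))"
      proof
        assume h: "\<forall>j\<ge>i. D \<alpha> (sh \<sigma> (j + ?n))"
        show "\<forall>j. D \<alpha> (sh \<sigma> j)"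
        proof
          fix j
          have "D \<alpha> (sh \<sigma> (max i j + ?n))" using h by simp
          then show "D \<alpha> (sh \<sigma> j)" using D_down'[OF a] by (meson le_add1 max.cobounded2 order_trans)
        qed
      qed auto
      then show ?thesis unfolding ap using Cons False PG by simp
    qed
  qed
qed
declare arun.simps(2)[simp del]

lemma arun_Suc: "arun d q0 w (Suc n) = d (arun d q0 w n) (w n)"
  by (rule arun.simps(2))

section \<open>Automaton for G\<close>

definition dB :: "ltl \<Rightarrow> ltl set \<times> bool \<Rightarrow> nat set \<Rightarrow> ltl set \<times> bool" where
  "dB \<alpha> q a = (let S' = upd \<alpha> (fst q) a in if \<alpha> \<in> S' then ({}, True) else (S', False))"

abbreviation "runB \<alpha> \<sigma> \<equiv> arun (dB \<alpha>) ({}, False) \<sigma>"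

fun segB :: "ltl \<Rightarrow> trace \<Rightarrow> nat \<Rightarrow> nat" where
  "segB \<alpha> \<sigma> 0 = 0"
| "segB \<alpha> \<sigma> (Suc t) = (if snd (runB \<alpha> \<sigma> (Suc t)) then Suc t else segB \<alpha> \<sigma> t)"

definition InvB :: "ltl \<Rightarrow> trace \<Rightarrow> nat \<Rightarrow> nat \<Rightarrow> bool" where
  "InvB \<alpha> \<sigma> t j \<longleftrightarrow> j \<le> t \<and> fst (runB \<alpha> \<sigma> t) = st \<alpha> (sh \<sigma> j) (t - j)
     \<and> (\<forall>i < t - j. \<not> sat (sh \<sigma> j) i \<alpha>)"

lemma stepB:
  assumes a: "tops \<alpha> \<subseteq> {TO}" and inv: "InvB \<alpha> \<sigma> t j"
  shows "if sat (sh \<sigma> j) (t - j) \<alpha> then InvB \<alpha> \<sigma> (Suc t) (Suc t) \<and> snd (runB \<alpha> \<sigma> (Suc t))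
         else InvB \<alpha> \<sigma> (Suc t) j \<and> \<not> snd (runB \<alpha> \<sigma> (Suc t))"
proof -
  let ?w = "sh \<sigma> j"
  have jt: "j \<le> t" using inv by (simp add: InvB_def)
  have wt: "?w (t - j) = \<sigma> t" using jt by (simp add: sh_def)
  have u: "upd \<alpha> (fst (runB \<alpha> \<sigma> t)) (\<sigma> t) = st \<alpha> ?w (Suc (t - j))"
    using inv upd_st[OF a, of ?w "t - j"] wt by (simp add: InvB_def)
  have r: "runB \<alpha> \<sigma> (Suc t) = (if sat ?w (t - j) \<alpha> then ({}, True) else (st \<alpha> ?w (Suc (t - j)), False))"
    using u alpha_in_st[of \<alpha> ?w "t - j"] by (simp add: dB_def Let_def arun_Suc)
  show ?thesis
  proof (cases "sat ?w (t - j) \<alpha>")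
    case True
    then show ?thesis using r by (simp add: InvB_def st_def)
  next
    case False
    have "Suc t - j = Suc (t - j)" using jt by simp
    then show ?thesis using r False inv jt unfolding InvB_def
      by (auto simp: less_Suc_eq)
  qed
qed

lemma segB_inv: assumes a: "tops \<alpha> \<subseteq> {TO}" shows "InvB \<alpha> \<sigma> t (segB \<alpha> \<sigma> t)"
proof (induction t)
  case 0 then show ?case by (simp add: InvB_def st_def)
next
  case (Suc t)
  note h = stepB[OF a Suc.IH]
  show ?case
  proof (cases "sat (sh \<sigma> (segB \<alpha> \<sigma> t)) (t - segB \<alpha> \<sigma> t) \<alpha>")
    case True
    then have "InvB \<alpha> \<sigma> (Suc t) (Suc t)" "snd (runB \<alpha> \<sigma> (Suc t))" using h by simp_all
    then show ?thesis by simp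
  next
    case False
    then have "InvB \<alpha> \<sigma> (Suc t) (segB \<alpha> \<sigma> t)" "\<not> snd (runB \<alpha> \<sigma> (Suc t))" using h by simp_all
    then show ?thesis by simp
  qed
qed

lemma segB_le: "segB \<alpha> \<sigma> t \<le> t"
  by (induction t) auto

lemma segB_mono: "t \<le> t' \<Longrightarrow> segB \<alpha> \<sigma> t \<le> segB \<alpha> \<sigma> t'"
proof (induction t' rule: dec_induct)
  case (step n)
  then show ?case using segB_le[of \<alpha> \<sigma> n] by auto
qed simp

lemma corrB:
  assumes a: "tops \<alpha> \<subseteq> {TO}"
  shows "(\<forall>j. D \<alpha> (sh \<sigma> j)) \<longleftrightarrow> (\<exists>\<^sub>\<infinity>n. snd (runB \<alpha> \<sigma> n))"
proof
  assume all: "\<forall>j. D \<alpha> (sh \<sigma> j)"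
  show "\<exists>\<^sub>\<infinity>n. snd (runB \<alpha> \<sigma> n)"
  proof (rule ccontr)
    assume "\<not> (\<exists>\<^sub>\<infinity>n. snd (runB \<alpha> \<sigma> n))"
    then obtain t0 where t0: "\<forall>n>t0. \<not> snd (runB \<alpha> \<sigma> n)" by (auto simp: MOST_nat)
    have segc: "segB \<alpha> \<sigma> (t0 + d) = segB \<alpha> \<sigma> t0" for d
      using t0 by (induction d) auto
    let ?j = "segB \<alpha> \<sigma> t0"
    obtain m where m: "sat (sh \<sigma> ?j) m \<alpha>" using all by (auto simp: D_def)
    let ?t = "t0 + (?j + m + 1)"
    have e: "segB \<alpha> \<sigma> ?t = ?j" by (rule segc)
    have "InvB \<alpha> \<sigma> ?t ?j" using segB_inv[OF a, of \<sigma> ?t] unfolding e .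
    then have "\<not> sat (sh \<sigma> ?j) m \<alpha>" unfolding InvB_def by auto
    then show False using m by simp
  qed
next
  assume inf: "\<exists>\<^sub>\<infinity>n. snd (runB \<alpha> \<sigma> n)"
  show "\<forall>j. D \<alpha> (sh \<sigma> j)"
  proof
    fix N
    obtain a1 where a1: "a1 > N" "snd (runB \<alpha> \<sigma> a1)" using inf by (auto simp: INFM_nat)
    obtain a2 where a2: "a2 > a1" "snd (runB \<alpha> \<sigma> a2)" using inf by (auto simp: INFM_nat)
    obtain t1 where t1: "a1 = Suc t1" using a1 by (cases a1) auto
    obtain t2 where t2: "a2 = Suc t2" using a2 by (cases a2) auto
    have s1: "segB \<alpha> \<sigma> a1 = a1" using a1 t1 by simp
    have "segB \<alpha> \<sigma> a1 \<le> segB \<alpha> \<sigma> t2" using a2 t2 segB_mono by simp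
    then have ge: "N \<le> segB \<alpha> \<sigma> t2" using s1 a1 by simp
    let ?j = "segB \<alpha> \<sigma> t2"
    have "sat (sh \<sigma> ?j) (t2 - ?j) \<alpha>"
      using stepB[OF a segB_inv[OF a, of \<sigma> t2]] a2 t2 by (auto split: if_splits)
    then have "D \<alpha> (sh \<sigma> ?j)" by (auto simp: D_def)
    then show "D \<alpha> (sh \<sigma> N)" using D_down'[OF a] ge by blast
  qed
qed

section \<open>Automaton for X^n\<close>

definition dA :: "nat \<Rightarrow> ltl \<Rightarrow> nat \<times> ltl set \<times> bool \<Rightarrow> nat set \<Rightarrow> nat \<times> ltl set \<times> bool" where
  "dA n \<alpha> q a = (case q of (c, S, f) \<Rightarrow>
     if c < n then (Suc c, S, f) else if f then (c, S, f)
     else (let S' = upd \<alpha> S a in (c, S', \<alpha> \<in> S')))"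

abbreviation "runA n \<alpha> \<sigma> \<equiv> arun (dA n \<alpha>) (0, {}, False) \<sigma>"

lemma runA_pre: "t \<le> n \<Longrightarrow> runA n \<alpha> \<sigma> t = (t, {}, False)"
  by (induction t) (auto simp: dA_def arun_Suc)

lemma runA_post:
  assumes a: "tops \<alpha> \<subseteq> {TO}"
  shows "fst (runA n \<alpha> \<sigma> (n + m)) = n \<and> snd (snd (runA n \<alpha> \<sigma> (n + m))) = (\<exists>i<m. sat (sh \<sigma> n) i \<alpha>)
    \<and> (\<not> (\<exists>i<m. sat (sh \<sigma> n) i \<alpha>) \<longrightarrow> fst (snd (runA n \<alpha> \<sigma> (n + m))) = st \<alpha> (sh \<sigma> n) m)"
proof (induction m)
  case 0 then show ?case using runA_pre[of n n] by (simp add: st_def)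
next
  case (Suc m)
  let ?w = "sh \<sigma> n"
  obtain S f where r: "runA n \<alpha> \<sigma> (n + m) = (n, S, f)" using Suc.IH by (metis prod.collapse)
  have wm: "\<sigma> (n + m) = ?w m" by (simp add: sh_def add.commute)
  show ?case
  proof (cases f)
    case True
    have "runA n \<alpha> \<sigma> (n + Suc m) = dA n \<alpha> (n, S, f) (\<sigma> (n + m))" using r by (simp add: arun_Suc)
    then have "runA n \<alpha> \<sigma> (n + Suc m) = (n, S, True)" using True by (simp add: dA_def)
    then show ?thesis using Suc.IH r True by (auto simp: less_Suc_eq)
  next
    case False
    then have S: "S = st \<alpha> ?w m" and nx: "\<not> (\<exists>i<m. sat ?w i \<alpha>)" using Suc.IH r by auto
    have "runA n \<alpha> \<sigma> (n + Suc m) = (n, st \<alpha> ?w (Suc m), sat ?w m \<alpha>)"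
      using r False S wm upd_st[OF a, of ?w m] alpha_in_st[of \<alpha> ?w m] by (simp add: dA_def Let_def arun_Suc)
    then show ?thesis using nx by (auto simp: less_Suc_eq)
  qed
qed

lemma corrA:
  assumes a: "tops \<alpha> \<subseteq> {TO}"
  shows "D \<alpha> (sh \<sigma> n) \<longleftrightarrow> (\<exists>\<^sub>\<infinity>t. snd (snd (runA n \<alpha> \<sigma> t)))"
proof
  assume "D \<alpha> (sh \<sigma> n)"
  then obtain i where i: "sat (sh \<sigma> n) i \<alpha>" by (auto simp: D_def)
  show "\<exists>\<^sub>\<infinity>t. snd (snd (runA n \<alpha> \<sigma> t))"
    unfolding INFM_nat
  proof
    fix x
    have "snd (snd (runA n \<alpha> \<sigma> (n + (x + i + 1))))" using runA_post[OF a, of n \<sigma> "x + i + 1"] i by auto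
    then show "\<exists>t>x. snd (snd (runA n \<alpha> \<sigma> t))" by (intro exI[of _ "n + (x + i + 1)"]) auto
  qed
next
  assume "\<exists>\<^sub>\<infinity>t. snd (snd (runA n \<alpha> \<sigma> t))"
  then obtain t where t: "t > n" "snd (snd (runA n \<alpha> \<sigma> t))" by (auto simp: INFM_nat)
  then have "snd (snd (runA n \<alpha> \<sigma> (n + (t - n))))" by simp
  then show "D \<alpha> (sh \<sigma> n)" using runA_post[OF a, of n \<sigma> "t - n"] by (auto simp: D_def)
qed
lemma bound_eq: "nat \<lfloor>(real k + 1) * 2 powr (1 * real m)\<rfloor> = (k + 1) * 2 ^ m"
proof -
  have "(2::real) powr (1 * real m) = 2 ^ m" by (simp add: powr_realpow)
  then have "(real k + 1) * 2 powr (1 * real m) = real ((k + 1) * 2 ^ m)" by (simp add: distrib_right)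
  then show ?thesis by (simp only: floor_of_nat nat_int)
qed

theorem theorem4:
  shows "\<exists>c::real. c > 0 \<and>
    (\<forall>AP k \<Pi> \<phi> \<psi>. finite AP \<longrightarrow> length \<Pi> = k \<longrightarrow>
       atoms \<phi> \<subseteq> AP \<longrightarrow> atoms \<psi> \<subseteq> AP \<longrightarrow>
       in_F_LTL {TO} \<phi> \<longrightarrow> in_LTL {TX, TwX, TF, TG} \<psi> \<longrightarrow>
       equiv_omega AP \<phi> \<psi> \<longrightarrow>
       min_dba_at_most AP (lang_omega AP (apply_prefix \<Pi> \<psi>))
         (nat \<lfloor>(real k + 1) * 2 powr (c * real (fsize \<phi>))\<rfloor>))"
proof (rule exI[of _ 1], intro conjI allI impI)
  fix AP :: "nat set" and k :: nat and \<Pi> :: "pop list" and \<phi> \<psi> :: ltl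
  assume finAP: "finite AP" and len: "length \<Pi> = k" and at1: "atoms \<phi> \<subseteq> AP" and at2: "atoms \<psi> \<subseteq> AP" and Fphi: "in_F_LTL {TO} \<phi>" and Lpsi: "in_LTL {TX, TwX, TF, TG} \<psi>"
    and eq: "equiv_omega AP \<phi> \<psi>"
  obtain \<alpha> where phi: "\<phi> = Eventually \<alpha>" and a: "tops \<alpha> \<subseteq> {TO}"
    using Fphi by (auto simp: in_F_LTL_def in_LTL_def)
  have p: "tops \<psi> \<subseteq> {TX, TwX, TF, TG}" using Lpsi by (simp add: in_LTL_def)
  have base: "\<forall>\<sigma>\<in>traces AP. sat \<sigma> 0 \<psi> = D \<alpha> \<sigma>"
  proof
    fix \<sigma> assume s: "\<sigma> \<in> traces AP"
    have "sat \<sigma> 0 \<psi> = (\<sigma> \<in> lang_omega AP \<psi>)" using s by (simp add: lang_omega_def)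
    also have "\<dots> = (\<sigma> \<in> lang_omega AP \<phi>)" using eq by (simp add: equiv_omega_def)
    also have "\<dots> = D \<alpha> \<sigma>" using s by (simp add: lang_omega_def phi D_def)
    finally show "sat \<sigma> 0 \<psi> = D \<alpha> \<sigma>" .
  qed
  let ?L = "lang_omega AP (apply_prefix \<Pi> \<psi>)"
  let ?n = "length (filter (\<lambda>p. p = PX) \<Pi>)"
  have memL: "\<sigma> \<in> ?L \<longleftrightarrow> (if PG \<in> set \<Pi> then (\<forall>j. D \<alpha> (sh \<sigma> j)) else D \<alpha> (sh \<sigma> ?n))"
    if s: "\<sigma> \<in> traces AP" for \<sigma>
    using char[OF a p base s, of 0 \<Pi>] s by (simp add: lang_omega_def)
  have LT: "?L \<subseteq> traces AP" by (auto simp: lang_omega_def)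
  let ?s = "card (sf \<alpha>)"
  have s_le: "(2::nat) ^ ?s \<le> 2 ^ fsize \<alpha>" using sf_card[of \<alpha>] by (simp add: power_increasing)
  have bd: "nat \<lfloor>(real k + 1) * 2 powr (1 * real (fsize \<phi>))\<rfloor> = (k + 1) * 2 ^ (fsize \<alpha> + 1)"
    using bound_eq[of k "fsize \<phi>"] by (simp add: phi)
  have "min_dba_at_most AP ?L ((k + 1) * 2 ^ (fsize \<alpha> + 1))"
  proof (cases "PG \<in> set \<Pi>")
    case True
    let ?Q = "Pow (sf \<alpha>) \<times> (UNIV :: bool set)"
    have fin: "finite ?Q" using sf_finite by simp
    have q0: "({}, False) \<in> ?Q" by simp
    have cl: "\<forall>q\<in>?Q. \<forall>x. x \<subseteq> AP \<longrightarrow> dB \<alpha> q x \<in> ?Q"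
      by (auto simp: dB_def upd_def Let_def)
    have corr: "\<forall>w\<in>traces AP. w \<in> ?L \<longleftrightarrow> (\<exists>\<^sub>\<infinity>n. snd (runB \<alpha> w n))"
    proof
      fix w assume w: "w \<in> traces AP"
      show "w \<in> ?L \<longleftrightarrow> (\<exists>\<^sub>\<infinity>n. snd (runB \<alpha> w n))"
        using memL[OF w] True corrB[OF a, of w] by simp
    qed
    have "card ?Q = 2 ^ ?s * 2" by (simp add: card_cartesian_product card_Pow sf_finite)
    also have "\<dots> \<le> 2 ^ fsize \<alpha> * 2" using s_le by simp
    also have "\<dots> \<le> (k + 1) * 2 ^ (fsize \<alpha> + 1)" by simp
    finally have cQ: "card ?Q \<le> (k + 1) * 2 ^ (fsize \<alpha> + 1)" .
    show ?thesis
      by (rule transfer_dba[where P="snd" and d="dB \<alpha>" and qi="({}, False)", OF fin q0 cl corr LT cQ])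
  next
    case False
    let ?Q1 = "(\<lambda>c. (c, {}, False)) ` {..<?n} :: (nat \<times> ltl set \<times> bool) set"
    let ?Q2 = "{?n} \<times> Pow (sf \<alpha>) \<times> (UNIV :: bool set)"
    let ?Q = "?Q1 \<union> ?Q2"
    have fin: "finite ?Q" using sf_finite by simp
    have q0: "(0, {}, False) \<in> ?Q" by (cases "?n = 0") auto
    have cl: "\<forall>q\<in>?Q. \<forall>x. x \<subseteq> AP \<longrightarrow> dA ?n \<alpha> q x \<in> ?Q"
    proof (intro ballI allI impI)
      fix q x assume q: "q \<in> ?Q"
      obtain c S f where qq: "q = (c, S, f)" by (cases q)
      have U: "upd \<alpha> S x \<subseteq> sf \<alpha>" by (auto simp: upd_def)
      show "dA ?n \<alpha> q x \<in> ?Q"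
      proof (cases "c < ?n")
        case True
        then have "q \<in> ?Q1" using q qq by auto
        then have SF: "S = {}" "f = False" using qq by auto
        have d: "dA ?n \<alpha> q x = (Suc c, {}, False)" using True SF qq by (simp add: dA_def)
        show ?thesis
        proof (cases "Suc c < ?n")
          case True
          then have "(Suc c, {}, False) \<in> ?Q1" by blast
          then show ?thesis unfolding d by (rule UnI1)
        next
          case False
          then have "Suc c = ?n" using \<open>c < ?n\<close> by simp
          then have "(Suc c, {}, False) \<in> ?Q2" by simp
          then show ?thesis unfolding d by (rule UnI2)
        qed
      next
        case False
        then have "q \<in> ?Q2" using q qq by auto
        then have c: "c = ?n" and S: "S \<subseteq> sf \<alpha>" using qq by auto
        have "dA ?n \<alpha> q x = (if f then (c, S, f) else (c, upd \<alpha> S x, \<alpha> \<in> upd \<alpha> S x))"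
          using qq c by (simp add: dA_def Let_def)
        moreover have "(if f then (c, S, f) else (c, upd \<alpha> S x, \<alpha> \<in> upd \<alpha> S x)) \<in> ?Q2"
          using c S U by (cases f) auto
        ultimately show ?thesis by (metis UnI2)
      qed
    qed
    have corr: "\<forall>w\<in>traces AP. w \<in> ?L \<longleftrightarrow> (\<exists>\<^sub>\<infinity>t. snd (snd (runA ?n \<alpha> w t)))"
    proof
      fix w assume w: "w \<in> traces AP"
      show "w \<in> ?L \<longleftrightarrow> (\<exists>\<^sub>\<infinity>t. snd (snd (runA ?n \<alpha> w t)))"
        using memL[OF w] False corrA[OF a, of w ?n] by simp
    qed
    have "card ?Q \<le> card ?Q1 + card ?Q2" by (rule card_Un_le)
    also have "card ?Q1 \<le> ?n" using card_image_le[of "{..<?n}"] by simp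
    also have "card ?Q2 = 2 ^ ?s * 2" by (simp add: card_cartesian_product card_Pow sf_finite)
    also have "?n \<le> k" using len length_filter_le[of _ \<Pi>] by simp
    finally have "card ?Q \<le> k + 2 ^ ?s * 2" by simp
    also have "\<dots> \<le> k * 2 ^ (fsize \<alpha> + 1) + 2 ^ (fsize \<alpha> + 1)" using s_le
      by (simp add: add_mono)
    also have "\<dots> = (k + 1) * 2 ^ (fsize \<alpha> + 1)" by (simp add: algebra_simps)
    finally have cQ: "card ?Q \<le> (k + 1) * 2 ^ (fsize \<alpha> + 1)" .
    show ?thesis
      by (rule transfer_dba[where P="\<lambda>q. snd (snd q)" and d="dA ?n \<alpha>" and qi="(0, {}, False)", OF fin q0 cl corr LT cQ])
  qed
  then show "min_dba_at_most AP ?L (nat \<lfloor>(real k + 1) * 2 powr (1 * real (fsize \<phi>))\<rfloor>)"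
    unfolding bd .
qed simp

end
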